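(* For every $n\ge 0$, let $K_n$ be any virtual knot diagram whose arrow diagram is ${\mathcal A}_n$. Then in the quandle of $K_n$ all generators are equal, so the quandle is generated by a single element, and the fundamental group of $K_n$ (defined via the Wirtinger-type presentation) is infinite cyclic, i.e. isomorphic to that of the unknot.
   Context: A virtual knot diagram is a generic immersion of an oriented circle in the plane in which each double point is a real crossing (with over/under information) or a virtual crossing. Its arrow diagram is the counterclockwise-oriented parametrizing circle with one arrow per real crossing joining its two preimages, pointing from the overcrossing preimage to the undercrossing preimage; an endpoint has sign $+$ if, viewing its strand in the direction of orientation, the other strand passes from right to left, and $-$ otherwise. The arrow diagram ${\mathcal A}_n$ ($n\ge0$) has arrows $x,y_1,\dots,y_n$ with endpoints in counterclockwise order $X^+,Y_1^+,\dots,Y_n^+,X^-,Y_n^-,\dots,Y_1^-$; $x$ points from $X^+$ to $X^-$; $y_j$ points from $Y_j^-$ to $Y_j^+$ if $n-j$ is even and from $Y_j^+$ to $Y_j^-$ if $n-j$ is odd. Quandle of a diagram: one generator per bridge arc (arc running between undercrossings at real crossings; labels pass unchanged through virtual crossings), and at each real crossing with overcrossing label $a$, incoming undercrossing label $b$, the outgoing undercrossing label is $c=b\triangleright a$ or $c=b\triangleleft a$ depending on the crossing sign, in the free quandle (a quandle satisfies $a\triangleright a=a\triangleleft a=a$, $(a\triangleleft b)\triangleright b=a=(a\triangleright b)\triangleleft b$, unique solvability, and self-distributivity). The fundamental group is the group with one generator per bridge arc and, at each real crossing, the relation $c=a^{\epsilon}ba^{-\epsilon}$ with $\epsilon=\pm1$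 the crossing sign. *)

theory Defs
  imports "HOL-Algebra.Elementary_Groups"
begin

text \<open>An arrow diagram on the counterclockwise-oriented circle is given by a number N of
  endpoint positions 0,...,N-1 (in counterclockwise order, which is the orientation of the knot)
  and a list of arrows (t, h, s): the arrow points from position t (overcrossing preimage) to
  position h (undercrossing preimage), and s is True iff the crossing is positive.\<close>

type_synonym arrow = "nat \<times> nat \<times> bool"

definition heads :: "arrow list \<Rightarrow> nat set" where
  "heads A = (\<lambda>(t, h, s). h) ` set A"

text \<open>Cyclic distance from position q forward to position p, in {1..N} (equal to N iff p = q).\<close>
definition cdist :: "nat \<Rightarrow> nat \<Rightarrow> nat \<Rightarrow> nat" where
  "cdist N q p = (p + N - q - 1) mod N + 1"

text \<open>Bridge arcs run from one undercrossing (head) to the next; an arc is identified by the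
  head at which it starts. The arc through position p (for p not a head), resp. the arc
  coming into the head p, is the one starting at the last head strictly before p.\<close>
definition arc_before :: "nat \<Rightarrow> arrow list \<Rightarrow> nat \<Rightarrow> nat" where
  "arc_before N A p = (ARG_MIN (\<lambda>h. cdist N h p) h. h \<in> heads A)"

datatype qterm = QGen nat | QRt qterm qterm | QLt qterm qterm
  \<comment> \<open>QRt a b = a \<triangleright> b,  QLt a b = a \<triangleleft> b\<close>

inductive qeq :: "(qterm \<times> qterm) set \<Rightarrow> qterm \<Rightarrow> qterm \<Rightarrow> bool" for R where
  qrel: "(a, b) \<in> R \<Longrightarrow> qeq R a b"
| qrefl: "qeq R a a"
| qsym: "qeq R a b \<Longrightarrow> qeq R b a"
| qtrans: "qeq R a b \<Longrightarrow> qeq R b c \<Longrightarrow> qeq R a c"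
| qcongRt: "qeq R a a' \<Longrightarrow> qeq R b b' \<Longrightarrow> qeq R (QRt a b) (QRt a' b')"
| qcongLt: "qeq R a a' \<Longrightarrow> qeq R b b' \<Longrightarrow> qeq R (QLt a b) (QLt a' b')"
| qidemRt: "qeq R (QRt a a) a"
| qidemLt: "qeq R (QLt a a) a"
| qcancel1: "qeq R (QRt (QLt a b) b) a"
| qcancel2: "qeq R (QLt (QRt a b) b) a"
| qdistr: "qeq R (QRt (QRt a b) c) (QRt (QRt a c) (QRt b c))"

text \<open>Quandle relations of an arrow diagram: at arrow (t,h,s) the overcrossing label is the arc
  through t, the incoming undercrossing label is the arc coming into h, and the outgoing one is
  the arc starting at h; positive crossings use \<triangleright>, negative ones \<triangleleft>.\<close>
definition quandle_rels :: "nat \<Rightarrow> arrow list \<Rightarrow> (qterm \<times> qterm) set" where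
  "quandle_rels N A = (\<lambda>(t, h, s).
      (QGen h, (if s then QRt else QLt) (QGen (arc_before N A h)) (QGen (arc_before N A t))))
      ` set A"

datatype gterm = GGen nat | GOne | GMul gterm gterm | GInv gterm

inductive geq :: "(gterm \<times> gterm) set \<Rightarrow> gterm \<Rightarrow> gterm \<Rightarrow> bool" for R where
  grel: "(a, b) \<in> R \<Longrightarrow> geq R a b"
| grefl: "geq R a a"
| gsym: "geq R a b \<Longrightarrow> geq R b a"
| gtrans: "geq R a b \<Longrightarrow> geq R b c \<Longrightarrow> geq R a c"
| gcongMul: "geq R a a' \<Longrightarrow> geq R b b' \<Longrightarrow> geq R (GMul a b) (GMul a' b')"
| gcongInv: "geq R a a' \<Longrightarrow> geq R (GInv a) (GInv a')"
| gassoc: "geq R (GMul (GMul a b) c) (GMul a (GMul b c))"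
| glunit: "geq R (GMul GOne a) a"
| glinv: "geq R (GMul (GInv a) a) GOne"

fun ggens :: "gterm \<Rightarrow> nat set" where
  "ggens (GGen i) = {i}"
| "ggens GOne = {}"
| "ggens (GMul a b) = ggens a \<union> ggens b"
| "ggens (GInv a) = ggens a"

definition pres_group :: "nat set \<Rightarrow> (gterm \<times> gterm) set \<Rightarrow> gterm set monoid" where
  "pres_group S R = \<lparr>carrier = {{t. geq R s t} | s. ggens s \<subseteq> S},
      monoid.mult = (\<lambda>X Y. {t. \<exists>a\<in>X. \<exists>b\<in>Y. geq R (GMul a b) t}),
      one = {t. geq R GOne t}\<rparr>"

definition group_rels :: "nat \<Rightarrow> arrow list \<Rightarrow> (gterm \<times> gterm) set" where
  "group_rels N A = (\<lambda>(t, h, s).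
      let a = GGen (arc_before N A t); b = GGen (arc_before N A h) in
      (GGen h, if s then GMul (GMul a b) (GInv a) else GMul (GMul (GInv a) b) a)) ` set A"

definition fund_group :: "nat \<Rightarrow> arrow list \<Rightarrow> gterm set monoid" where
  "fund_group N A = pres_group (heads A) (group_rels N A)"

text \<open>Positions (counterclockwise): X+ = 0, Y_j+ = j (1 \<le> j \<le> n), X- = n+1,
  Y_j- = 2n+2-j. An arrow's crossing sign is the sign of its tail (overcrossing) endpoint.\<close>

definition A_N :: "nat \<Rightarrow> nat" where "A_N n = 2 * n + 2"

definition A_arrows :: "nat \<Rightarrow> arrow list" where
  "A_arrows n = (0, n + 1, True) #
     map (\<lambda>j. if even (n - j) then (2 * n + 2 - j, j, False) else (j, 2 * n + 2 - j, True))
       [1..<n + 1]"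

end

theory Submission
  imports Defs
begin

definition cls :: "(gterm \<times> gterm) set \<Rightarrow> gterm \<Rightarrow> gterm set" where
  "cls R s = {t. geq R s t}"

lemma cls_eq_iff: "cls R a = cls R b \<longleftrightarrow> geq R a b"
proof
  assume "cls R a = cls R b"
  then have "b \<in> cls R a" by (simp add: cls_def geq.grefl)
  then show "geq R a b" by (simp add: cls_def)
next
  assume h: "geq R a b"
  show "cls R a = cls R b"
    unfolding cls_def using h by (auto intro: geq.gtrans geq.gsym)
qed

lemma carrier_pres: "carrier (pres_group S R) = cls R ` {s. ggens s \<subseteq> S}"
  by (auto simp: pres_group_def cls_def)

lemma one_pres: "one (pres_group S R) = cls R GOne"
  by (simp add: pres_group_def cls_def)

lemma mult_pres: "monoid.mult (pres_group S R) (cls R a) (cls R b) = cls R (GMul a b)"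
  unfolding pres_group_def cls_def
  by (auto intro: geq.gtrans geq.gcongMul geq.grefl)

declare geq.gtrans[trans]

lemma group_pres: "group (pres_group S R)"
proof (rule groupI)
  fix x y assume "x \<in> carrier (pres_group S R)" "y \<in> carrier (pres_group S R)"
  then show "x \<otimes>\<^bsub>pres_group S R\<^esub> y \<in> carrier (pres_group S R)"
    by (auto simp: carrier_pres mult_pres)
next
  show "\<one>\<^bsub>pres_group S R\<^esub> \<in> carrier (pres_group S R)"
    by (auto simp: carrier_pres one_pres intro!: image_eqI[where x=GOne])
next
  fix x y z assume "x \<in> carrier (pres_group S R)" "y \<in> carrier (pres_group S R)"
    "z \<in> carrier (pres_group S R)"
  then show "x \<otimes>\<^bsub>pres_group S R\<^esub> y \<otimes>\<^bsub>pres_group S R\<^esub> z =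
        x \<otimes>\<^bsub>pres_group S R\<^esub> (y \<otimes>\<^bsub>pres_group S R\<^esub> z)"
  proof -
    have as: "cls R (GMul (GMul a b) c) = cls R (GMul a (GMul b c))" for a b c
      by (simp add: cls_eq_iff geq.gassoc)
    show ?thesis using \<open>x \<in> _\<close> \<open>y \<in> _\<close> \<open>z \<in> _\<close>
      by (auto simp: carrier_pres mult_pres as)
  qed
next
  fix x assume "x \<in> carrier (pres_group S R)"
  then show "\<one>\<^bsub>pres_group S R\<^esub> \<otimes>\<^bsub>pres_group S R\<^esub> x = x"
  proof -
    have lu: "cls R (GMul GOne a) = cls R a" for a
      by (simp add: cls_eq_iff geq.glunit)
    show ?thesis using \<open>x \<in> _\<close> by (auto simp: carrier_pres mult_pres one_pres lu)
  qed
next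
  fix x assume "x \<in> carrier (pres_group S R)"
  then obtain s where s: "ggens s \<subseteq> S" "x = cls R s" by (auto simp: carrier_pres)
  have "cls R (GInv s) \<in> carrier (pres_group S R)"
    using s by (auto simp: carrier_pres)
  moreover have "cls R (GInv s) \<otimes>\<^bsub>pres_group S R\<^esub> x = \<one>\<^bsub>pres_group S R\<^esub>"
    using s by (simp add: mult_pres one_pres cls_eq_iff geq.glinv)
  ultimately show "\<exists>y\<in>carrier (pres_group S R). y \<otimes>\<^bsub>pres_group S R\<^esub> x = \<one>\<^bsub>pres_group S R\<^esub>"
    by blast
qed

lemma cls_in_carrier: "ggens s \<subseteq> S \<Longrightarrow> cls R s \<in> carrier (pres_group S R)"
  by (auto simp: carrier_pres)

lemma inv_pres: "ggens s \<subseteq> S \<Longrightarrow> inv\<^bsub>pres_group S R\<^esub> (cls R s) = cls R (GInv s)"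
proof (rule group.inv_equality[OF group_pres])
  assume "ggens s \<subseteq> S"
  then show "cls R s \<in> carrier (pres_group S R)" "cls R (GInv s) \<in> carrier (pres_group S R)"
    by (auto intro!: cls_in_carrier)
  show "cls R (GInv s) \<otimes>\<^bsub>pres_group S R\<^esub> cls R s = \<one>\<^bsub>pres_group S R\<^esub>"
    by (simp add: mult_pres one_pres cls_eq_iff geq.glinv)
qed

fun gexp :: "gterm \<Rightarrow> int" where
  "gexp (GGen i) = 1"
| "gexp GOne = 0"
| "gexp (GMul a b) = gexp a + gexp b"
| "gexp (GInv a) = - gexp a"

lemma gexp_geq:
  assumes "geq R a b" and "\<And>a b. (a, b) \<in> R \<Longrightarrow> gexp a = gexp b"
  shows "gexp a = gexp b"
  using assms by (induction rule: geq.induct) auto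

lemma pres_iso_Z:
  assumes rels: "\<And>a b. (a, b) \<in> R \<Longrightarrow> gexp a = gexp b"
    and g0: "g0 \<in> S"
    and gens: "\<And>i. i \<in> S \<Longrightarrow> cls R (GGen i) = cls R (GGen g0)"
  shows "pres_group S R \<cong> integer_group"
proof -
  let ?G = "pres_group S R"
  let ?g = "cls R (GGen g0)"
  interpret G: group ?G by (rule group_pres)
  have gc: "?g \<in> carrier ?G" using g0 by (intro cls_in_carrier) auto
  have pw: "ggens s \<subseteq> S \<Longrightarrow> cls R s = ?g [^]\<^bsub>?G\<^esub> gexp s" for s
  proof (induction s)
    case (GGen i)
    then show ?case using gens gc by simp
  next
    case GOne
    then show ?case by (simp add: one_pres)
  next
    case (GMul a b)
    have "cls R (GMul a b) = cls R a \<otimes>\<^bsub>?G\<^esub> cls R b" by (simp add: mult_pres)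
    also have "\<dots> = ?g [^]\<^bsub>?G\<^esub> gexp a \<otimes>\<^bsub>?G\<^esub> ?g [^]\<^bsub>?G\<^esub> gexp b"
      using GMul by simp
    also have "\<dots> = ?g [^]\<^bsub>?G\<^esub> gexp (GMul a b)"
      using gc by (simp add: G.int_pow_mult)
    finally show ?case .
  next
    case (GInv a)
    have "cls R (GInv a) = inv\<^bsub>?G\<^esub> (cls R a)" using GInv.prems by (simp add: inv_pres)
    also have "\<dots> = inv\<^bsub>?G\<^esub> (?g [^]\<^bsub>?G\<^esub> gexp a)" using GInv by simp
    also have "\<dots> = ?g [^]\<^bsub>?G\<^esub> gexp (GInv a)" using gc by (simp add: G.int_pow_neg)
    finally show ?case .
  qed
  define phi where "phi X = gexp (SOME t. t \<in> X)" for X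
  have phi: "phi (cls R s) = gexp s" for s
  proof -
    have "s \<in> cls R s" by (simp add: cls_def geq.grefl)
    then have "(SOME t. t \<in> cls R s) \<in> cls R s" by (rule someI)
    then have "geq R s (SOME t. t \<in> cls R s)" by (simp add: cls_def)
    then show ?thesis unfolding phi_def using gexp_geq rels by metis
  qed
  have hom: "phi \<in> hom ?G integer_group"
    by (rule homI) (auto simp: carrier_pres mult_pres phi)
  have inj: "inj_on phi (carrier ?G)"
  proof (rule inj_onI)
    fix X Y assume "X \<in> carrier ?G" "Y \<in> carrier ?G" "phi X = phi Y"
    then obtain a b where "ggens a \<subseteq> S" "ggens b \<subseteq> S" "X = cls R a" "Y = cls R b"
      "gexp a = gexp b" by (auto simp: carrier_pres phi)
    then show "X = Y" using pw by simp
  qed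
  have surj: "phi ` carrier ?G = carrier integer_group"
  proof -
    have "k \<in> phi ` carrier ?G" for k :: int
    proof -
    have "phi (?g [^]\<^bsub>?G\<^esub> k) = phi ?g [^]\<^bsub>integer_group\<^esub> k"
      by (rule hom_int_pow[OF hom gc group_pres group_integer_group])
    also have "\<dots> = k" by (simp add: phi)
    finally show "k \<in> phi ` carrier ?G" using gc by (metis G.int_pow_closed image_eqI)
    qed
    then show ?thesis by auto
  qed
  show ?thesis
    by (rule is_isoI[of phi]) (simp add: iso_iff hom inj surj)
qed

lemma cdist_lt: "x < p \<Longrightarrow> p < N \<Longrightarrow> cdist N x p = p - x"
proof -
  assume a: "x < p" "p < N"
  have e: "p + N - x - 1 = N + (p - x - 1)" using a by simp
  have "(p + N - x - 1) mod N = (N + (p - x - 1)) mod N" by (simp only: e)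
  also have "\<dots> = (p - x - 1) mod N" by (rule mod_add_self1)
  also have "\<dots> = p - x - 1" using a by (intro mod_less) simp
  finally have "(p + N - x - 1) mod N = p - x - 1" .
  then show ?thesis using a by (simp add: cdist_def)
qed

lemma cdist_ge: "p \<le> x \<Longrightarrow> x < N \<Longrightarrow> cdist N x p = p + N - x"
proof -
  assume a: "p \<le> x" "x < N"
  have "p + N - x - 1 < N" using a by simp
  then have "(p + N - x - 1) mod N = p + N - x - 1" by simp
  then show ?thesis using a by (simp add: cdist_def)
qed

lemma arc_before_eqI:
  assumes h: "h \<in> heads A"
    and less: "\<And>x. x \<in> heads A \<Longrightarrow> x \<noteq> h \<Longrightarrow> cdist N h p < cdist N x p"
  shows "arc_before N A p = h"
proof -
  let ?a = "arc_before N A p"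
  have "?a \<in> heads A \<and> (\<forall>y. y \<in> heads A \<longrightarrow> cdist N ?a p \<le> cdist N y p)"
    unfolding arc_before_def by (rule arg_min_nat_lemma[where k=h], rule h)
  then show ?thesis using less[of ?a] h by force
qed

lemma arc_prev:
  assumes "h \<in> heads A" "\<forall>x\<in>heads A. x < N" "h < p" "p < N"
    "\<forall>x\<in>heads A. \<not> (h < x \<and> x < p)"
  shows "arc_before N A p = h"
proof (rule arc_before_eqI[OF assms(1)])
  fix x assume x: "x \<in> heads A" "x \<noteq> h"
  have cx: "cdist N h p = p - h" using assms by (simp add: cdist_lt)
  show "cdist N h p < cdist N x p"
  proof (cases "x < p")
    case True
    then have "x < h" using assms(5) x by force
    then show ?thesis using cx True assms by (simp add: cdist_lt)
  next
    case False
    have "x < N" using assms(2) x by blast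
    then show ?thesis using cx assms False by (simp add: cdist_ge)
  qed
qed

lemma arc_wrap:
  assumes "h \<in> heads A" "\<forall>x\<in>heads A. x < N" "p < h"
    "\<forall>x\<in>heads A. \<not> x < p \<and> \<not> h < x"
  shows "arc_before N A p = h"
proof (rule arc_before_eqI[OF assms(1)])
  fix x assume x: "x \<in> heads A" "x \<noteq> h"
  have "h < N" using assms by blast
  then have cx: "cdist N h p = p + N - h" using assms by (simp add: cdist_ge)
  have "p \<le> x" "x < h" using assms x by force+
  then show "cdist N h p < cdist N x p" using cx \<open>h < N\<close> by (simp add: cdist_ge)
qed

definition hA :: "nat \<Rightarrow> nat \<Rightarrow> nat" where
  "hA n j = (if even (n - j) then j else 2 * n + 2 - j)"

lemma heads_A_eq: "heads (A_arrows n) = insert (n + 1) (hA n ` {1..<n+1})"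
proof -
  let ?f = "\<lambda>j. if even (n - j) then (2 * n + 2 - j, j, False) else (j, 2 * n + 2 - j, True)"
  have c: "(\<lambda>(t, h, s). h) \<circ> ?f = hA n" by (rule ext) (simp add: hA_def)
  have "heads (A_arrows n) = insert (n + 1) (((\<lambda>(t, h, s). h) \<circ> ?f) ` {1..<n+1})"
    unfolding heads_def A_arrows_def by (simp only: list.set set_map image_insert image_comp set_upt) simp
  then show ?thesis by (simp only: c)
qed

lemma heads_A: "h \<in> heads (A_arrows n) \<longleftrightarrow>
   (1 \<le> h \<and> h \<le> n \<and> even (n - h)) \<or> (n + 1 \<le> h \<and> h \<le> 2 * n + 1 \<and> odd (h - n))"
proof
  assume "h \<in> heads (A_arrows n)"
  then have "h = n + 1 \<or> (\<exists>j\<in>{1..<n+1}. h = hA n j)" by (simp add: heads_A_eq image_iff)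
  then show "(1 \<le> h \<and> h \<le> n \<and> even (n - h)) \<or> (n + 1 \<le> h \<and> h \<le> 2 * n + 1 \<and> odd (h - n))"
  proof
    assume "h = n + 1" then show ?thesis by simp
  next
    assume "\<exists>j\<in>{1..<n+1}. h = hA n j"
    then obtain j where j: "1 \<le> j" "j < n + 1" "h = hA n j" by auto
    show ?thesis
    proof (cases "even (n - j)")
      case True then show ?thesis using j by (simp add: hA_def)
    next
      case False
      then have o: "odd (2 * n + 2 - j - n)" using j by presburger
      have hh: "h = 2 * n + 2 - j" using j False by (simp add: hA_def)
      have "n + 1 \<le> h \<and> h \<le> 2 * n + 1" using hh j by linarith
      then show ?thesis using o hh by blast
    qed
  qed
next
  assume a: "(1 \<le> h \<and> h \<le> n \<and> even (n - h)) \<or> (n + 1 \<le> h \<and> h \<le> 2 * n + 1 \<and> odd (h - n))"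
  show "h \<in> heads (A_arrows n)"
  proof (cases "h = n + 1")
    case True
    then show ?thesis by (simp add: heads_A_eq image_iff)
  next
    case False
    have "\<exists>j\<in>{1..<n+1}. h = hA n j"
    proof (cases "h \<le> n")
      case True
      then have "1 \<le> h" "even (n - h)" using a by auto
      then show ?thesis using True by (intro bexI[of _ h]) (auto simp: hA_def)
    next
      case False
      then have b: "n + 1 < h" "h \<le> 2 * n + 1" "odd (h - n)" using a \<open>h \<noteq> n + 1\<close> by auto
      have o: "odd (n - (2 * n + 2 - h))" using b by presburger
      have e: "2 * n + 2 - (2 * n + 2 - h) = h" using b by simp
      show ?thesis using b o e
        by (intro bexI[of _ "2 * n + 2 - h"]) (auto simp: hA_def)
    qed
    then show ?thesis by (simp add: heads_A_eq image_iff)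
  qed
qed

definition trip :: "nat \<Rightarrow> nat \<Rightarrow> nat \<Rightarrow> nat \<Rightarrow> bool \<Rightarrow> bool" where
  "trip n u v w s \<longleftrightarrow> (\<exists>t. (t, u, s) \<in> set (A_arrows n) \<and>
      v = arc_before (A_N n) (A_arrows n) u \<and> w = arc_before (A_N n) (A_arrows n) t)"

definition Lx :: "nat \<Rightarrow> nat \<Rightarrow> nat" where
  "Lx n i = (if i < (n + 1) div 2 then n - 2 * i else n + 1 + 2 * (n div 2))"

lemma head_bounds: "x \<in> heads (A_arrows n) \<Longrightarrow> 1 \<le> x \<and> x \<le> 2 * n + 1"
  unfolding heads_A by auto

lemma head_low: "x \<in> heads (A_arrows n) \<Longrightarrow> x \<le> n \<Longrightarrow> even (n - x)"
  unfolding heads_A by auto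

lemma head_up: "x \<in> heads (A_arrows n) \<Longrightarrow> n < x \<Longrightarrow> odd (x - n)"
  unfolding heads_A by auto

lemma heads_lt: "\<forall>x\<in>heads (A_arrows n). x < A_N n"
  by (auto simp: heads_A A_N_def)

lemma top_head: "n + 1 + 2 * (n div 2) \<in> heads (A_arrows n)"
proof -
  have "odd (n + 1 + 2 * (n div 2) - n)" by simp
  moreover have "n + 1 + 2 * (n div 2) \<le> 2 * n + 1" by auto
  ultimately show ?thesis unfolding heads_A by auto
qed

lemma mem_E: "i < (n + 1) div 2 \<Longrightarrow> (n + 2 + 2 * i, n - 2 * i, False) \<in> set (A_arrows n)"
proof -
  assume i: "i < (n + 1) div 2"
  let ?j = "n - 2 * i"
  have "?j \<in> {1..<n+1}" "even (n - ?j)" "2 * n + 2 - ?j = n + 2 + 2 * i" using i by auto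
  then show ?thesis unfolding A_arrows_def by (simp only: list.set set_map set_upt) force
qed

lemma mem_O: "i < n div 2 \<Longrightarrow> (n - 2 * i - 1, n + 3 + 2 * i, True) \<in> set (A_arrows n)"
proof -
  assume i: "i < n div 2"
  let ?j = "n - 2 * i - 1"
  have "?j \<in> {1..<n+1}" "odd (n - ?j)" "2 * n + 2 - ?j = n + 3 + 2 * i" using i by auto
  then show ?thesis unfolding A_arrows_def by (simp only: list.set set_map set_upt) force
qed

lemma arc_low: "i < (n + 1) div 2 \<Longrightarrow> arc_before (A_N n) (A_arrows n) (n - 2 * i) = Lx n (i + 1)"
proof -
  assume i: "i < (n + 1) div 2"
  show ?thesis
  proof (cases "i + 1 < (n + 1) div 2")
    case True
    have "arc_before (A_N n) (A_arrows n) (n - 2 * i) = n - 2 * i - 2"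
    proof (rule arc_prev[OF _ heads_lt])
      have "even (n - (n - 2 * i - 2))" using True by presburger
      moreover have "1 \<le> n - 2 * i - 2" using True by auto
      ultimately show "n - 2 * i - 2 \<in> heads (A_arrows n)" unfolding heads_A by auto
      show "n - 2 * i - 2 < n - 2 * i" "n - 2 * i < A_N n" using True by (auto simp: A_N_def)
      show "\<forall>x\<in>heads (A_arrows n). \<not> (n - 2 * i - 2 < x \<and> x < n - 2 * i)"
      proof (intro ballI notI)
        fix x assume x: "x \<in> heads (A_arrows n)" "n - 2 * i - 2 < x \<and> x < n - 2 * i"
        then have "x = n - 2 * i - 1" by auto
        moreover have "x \<le> n" using x by auto
        ultimately show False using head_low[OF x(1)] True by presburger
      qed
    qed
    then show ?thesis using True by (simp add: Lx_def)
  next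
    case False
    have "arc_before (A_N n) (A_arrows n) (n - 2 * i) = n + 1 + 2 * (n div 2)"
    proof (rule arc_wrap[OF top_head heads_lt])
      show "n - 2 * i < n + 1 + 2 * (n div 2)" by simp
      show "\<forall>x\<in>heads (A_arrows n). \<not> x < n - 2 * i \<and> \<not> n + 1 + 2 * (n div 2) < x"
      proof (intro ballI conjI notI)
        fix x assume x: "x \<in> heads (A_arrows n)" "x < n - 2 * i"
        have b: "1 \<le> x" using head_bounds[OF x(1)] by auto
        have "x = n - 2 * i - 1" "n - 2 * i = 2" using b x(2) False i by auto
        then show False using head_low[OF x(1)] x(2) by presburger
      next
        fix x assume x: "x \<in> heads (A_arrows n)" "n + 1 + 2 * (n div 2) < x"
        have b: "x \<le> 2 * n + 1" using head_bounds[OF x(1)] by auto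
        have "x = 2 * n + 1" "odd n" using b x(2) by presburger+
        then show False using head_up[of x n] x by simp
      qed
    qed
    then show ?thesis using False by (simp add: Lx_def)
  qed
qed

lemma arc_lowO:
  assumes i: "i < n div 2"
  shows "arc_before (A_N n) (A_arrows n) (n - 2 * i - 1) = Lx n (i + 1)"
proof -
  have i2: "2 * i + 2 \<le> n" using i by presburger
  show ?thesis
  proof (cases "i + 1 < (n + 1) div 2")
    case True
    have T2: "2 * i + 3 \<le> n" using True by presburger
    have "arc_before (A_N n) (A_arrows n) (n - 2 * i - 1) = n - 2 * i - 2"
    proof (rule arc_prev[OF _ heads_lt])
      have "n - (n - 2 * i - 2) = 2 * i + 2" using T2 by linarith
      then have "even (n - (n - 2 * i - 2))" by simp
      moreover have "1 \<le> n - 2 * i - 2" "n - 2 * i - 2 \<le> n" using T2 by linarith+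
      ultimately show "n - 2 * i - 2 \<in> heads (A_arrows n)" unfolding heads_A by blast
      show "n - 2 * i - 2 < n - 2 * i - 1" using T2 by linarith
      show "n - 2 * i - 1 < A_N n" unfolding A_N_def using T2 by linarith
      show "\<forall>x\<in>heads (A_arrows n). \<not> (n - 2 * i - 2 < x \<and> x < n - 2 * i - 1)"
      proof (intro ballI notI)
        fix x assume "n - 2 * i - 2 < x \<and> x < n - 2 * i - 1"
        then show False using T2 by linarith
      qed
    qed
    then show ?thesis using True by (simp add: Lx_def)
  next
    case False
    have F2: "n = 2 * i + 2" using False i2 by presburger
    have "arc_before (A_N n) (A_arrows n) (n - 2 * i - 1) = n + 1 + 2 * (n div 2)"
    proof (rule arc_wrap[OF top_head heads_lt])
      show "n - 2 * i - 1 < n + 1 + 2 * (n div 2)" by simp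
      show "\<forall>x\<in>heads (A_arrows n). \<not> x < n - 2 * i - 1 \<and> \<not> n + 1 + 2 * (n div 2) < x"
      proof (intro ballI conjI notI)
        fix x assume x: "x \<in> heads (A_arrows n)" "x < n - 2 * i - 1"
        have b: "1 \<le> x" using head_bounds[OF x(1)] by auto
        show False using b x(2) F2 by linarith
      next
        fix x assume x: "x \<in> heads (A_arrows n)" "n + 1 + 2 * (n div 2) < x"
        have b: "x \<le> 2 * n + 1" using head_bounds[OF x(1)] by auto
        have "n div 2 = i + 1" using F2 by simp
        then show False using b x(2) F2 by linarith
      qed
    qed
    then show ?thesis using False by (simp add: Lx_def)
  qed
qed

lemma arc_up:
  assumes i: "i < (n + 1) div 2"
  shows "arc_before (A_N n) (A_arrows n) (n + 2 + 2 * i) = n + 1 + 2 * i"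
proof (rule arc_prev[OF _ heads_lt])
  have "odd (n + 1 + 2 * i - n)" by simp
  moreover have "n + 1 + 2 * i \<le> 2 * n + 1" using i by presburger
  ultimately show "n + 1 + 2 * i \<in> heads (A_arrows n)" unfolding heads_A by auto
  show "n + 1 + 2 * i < n + 2 + 2 * i" by simp
  show "n + 2 + 2 * i < A_N n" using i unfolding A_N_def by presburger
  show "\<forall>x\<in>heads (A_arrows n). \<not> (n + 1 + 2 * i < x \<and> x < n + 2 + 2 * i)"
  proof (intro ballI notI)
    fix x assume "n + 1 + 2 * i < x \<and> x < n + 2 + 2 * i"
    then show False by linarith
  qed
qed

lemma arc_upO:
  assumes i: "i < n div 2"
  shows "arc_before (A_N n) (A_arrows n) (n + 3 + 2 * i) = n + 1 + 2 * i"
proof (rule arc_prev[OF _ heads_lt])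
  have "odd (n + 1 + 2 * i - n)" by simp
  moreover have "n + 1 + 2 * i \<le> 2 * n + 1" using i by presburger
  ultimately show "n + 1 + 2 * i \<in> heads (A_arrows n)" unfolding heads_A by auto
  show "n + 1 + 2 * i < n + 3 + 2 * i" by simp
  show "n + 3 + 2 * i < A_N n" using i unfolding A_N_def by presburger
  show "\<forall>x\<in>heads (A_arrows n). \<not> (n + 1 + 2 * i < x \<and> x < n + 3 + 2 * i)"
  proof (intro ballI notI)
    fix x assume x: "x \<in> heads (A_arrows n)" "n + 1 + 2 * i < x \<and> x < n + 3 + 2 * i"
    then have "x = n + 2 + 2 * i" by linarith
    moreover have "odd (x - n)" using head_up[OF x(1)] x(2) by linarith
    ultimately show False by simp
  qed
qed

lemma trip_E:
  assumes i: "i < (n + 1) div 2"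
  shows "trip n (n - 2 * i) (Lx n (i + 1)) (n + 1 + 2 * i) False"
  unfolding trip_def
  by (intro exI[of _ "n + 2 + 2 * i"] conjI mem_E[OF i] arc_low[OF i, symmetric] arc_up[OF i, symmetric])

lemma trip_O:
  assumes i: "i < n div 2"
  shows "trip n (n + 3 + 2 * i) (n + 1 + 2 * i) (Lx n (i + 1)) True"
  unfolding trip_def
  by (intro exI[of _ "n - 2 * i - 1"] conjI mem_O[OF i] arc_lowO[OF i, symmetric] arc_upO[OF i, symmetric])

lemma chain:
  fixes E :: "nat \<Rightarrow> nat \<Rightarrow> bool" and T :: "nat \<Rightarrow> nat \<Rightarrow> nat \<Rightarrow> bool" and k :: nat
  assumes rf: "\<And>a. E a a" and sy: "\<And>a b. E a b \<Longrightarrow> E b a"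
    and tr: "\<And>a b c. E a b \<Longrightarrow> E b c \<Longrightarrow> E a c"
    and clos: "\<And>u v w. T u v w \<Longrightarrow> E u w \<longleftrightarrow> E v w"
    and Er: "\<And>i. i < p \<Longrightarrow> T (L i) (L (i + 1)) (U i)"
    and Or: "\<And>i. i < q \<Longrightarrow> T (U (i + 1)) (U i) (L (i + 1))"
    and Lp: "\<And>i. p \<le> i \<Longrightarrow> L i = U q"
    and qp: "q \<le> p" and pq: "p \<le> q + 1"
  shows "k \<le> q \<Longrightarrow> E (U (q - k)) (U q) \<and> E (L (q - k)) (U q)"
proof (induction k)
  case 0
  have "E (L q) (U q)"
  proof (cases "q < p")
    case True
    have "L (q + 1) = U q" using pq by (intro Lp) simp
    then have "E (L (q + 1)) (U q)" using rf by simp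
    then show ?thesis using clos[OF Er[OF True]] by blast
  next
    case False
    then show ?thesis using Lp[of q] rf by simp
  qed
  then show ?case using rf by simp
next
  case (Suc k)
  define i where "i = q - Suc k"
  have i1: "i + 1 = q - k" "i < q" using Suc.prems by (auto simp: i_def)
  have IH: "E (U (i + 1)) (U q)" "E (L (i + 1)) (U q)" using Suc i1 by auto
  have "E (U (i + 1)) (L (i + 1))" using IH sy tr by blast
  then have "E (U i) (L (i + 1))" using clos[OF Or[OF i1(2)]] by blast
  then have Ui: "E (U i) (U q)" using IH tr by blast
  have "E (L (i + 1)) (U i)" using IH Ui sy tr by blast
  then have "E (L i) (U i)" using clos[OF Er] i1 qp by auto
  then have "E (L i) (U q)" using Ui tr by blast
  then show ?case using Ui i_def by simp
qed

lemma heads_cover: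
  assumes "h \<in> heads (A_arrows n)"
  shows "(\<exists>i < (n + 1) div 2. h = Lx n i) \<or> (\<exists>i \<le> n div 2. h = n + 1 + 2 * i)"
proof (cases "h \<le> n")
  case True
  then have h: "1 \<le> h" "even (n - h)" using assms head_bounds head_low by auto
  from h(2) obtain m where m: "n - h = 2 * m" by (rule evenE)
  have "m < (n + 1) div 2" using m h True by presburger
  moreover have "h = Lx n m" using m True calculation by (simp add: Lx_def)
  ultimately show ?thesis by blast
next
  case False
  then have h: "h \<le> 2 * n + 1" "odd (h - n)" using assms head_bounds head_up by auto
  from h(2) obtain m where m: "h - n = 2 * m + 1" by (rule oddE)
  have "m \<le> n div 2" using m h False by presburger
  moreover have "h = n + 1 + 2 * m" using m False by simp
  ultimately show ?thesis by blast
qed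

lemma all_heads:
  fixes E :: "nat \<Rightarrow> nat \<Rightarrow> bool"
  assumes rf: "\<And>a. E a a" and sy: "\<And>a b. E a b \<Longrightarrow> E b a"
    and tr: "\<And>a b c. E a b \<Longrightarrow> E b c \<Longrightarrow> E a c"
    and clos: "\<And>u v w s. trip n u v w s \<Longrightarrow> E u w \<longleftrightarrow> E v w"
    and h: "h \<in> heads (A_arrows n)"
  shows "E h (n + 1 + 2 * (n div 2))"
proof -
  let ?p = "(n + 1) div 2" and ?q = "n div 2" and ?U = "\<lambda>i. n + 1 + 2 * i"
  have C: "k \<le> ?q \<Longrightarrow> E (?U (?q - k)) (?U ?q) \<and> E (Lx n (?q - k)) (?U ?q)" for k
  proof (rule chain[where E=E and T="\<lambda>u v w. \<exists>s. trip n u v w s" and p="?p"])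
    show "\<And>a. E a a" by (rule rf)
    show "\<And>a b. E a b \<Longrightarrow> E b a" by (rule sy)
    show "\<And>a b c. E a b \<Longrightarrow> E b c \<Longrightarrow> E a c" by (rule tr)
    show "\<And>u v w. \<exists>s. trip n u v w s \<Longrightarrow> E u w \<longleftrightarrow> E v w" using clos by blast
    show "\<And>i. i < ?p \<Longrightarrow> \<exists>s. trip n (Lx n i) (Lx n (i + 1)) (?U i) s"
    proof -
      fix i assume i: "i < ?p"
      then have t: "trip n (n - 2 * i) (Lx n (i + 1)) (n + 1 + 2 * i) False" by (rule trip_E)
      have e: "Lx n i = n - 2 * i" using i by (simp add: Lx_def)
      have "trip n (Lx n i) (Lx n (i + 1)) (?U i) False" unfolding e by (rule t)
      then show "\<exists>s. trip n (Lx n i) (Lx n (i + 1)) (?U i) s" by (rule exI)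
    qed
    show "\<And>i. i < ?q \<Longrightarrow> \<exists>s. trip n (?U (i + 1)) (?U i) (Lx n (i + 1)) s"
    proof -
      fix i assume "i < ?q"
      then have t: "trip n (n + 3 + 2 * i) (n + 1 + 2 * i) (Lx n (i + 1)) True" by (rule trip_O)
      have e: "?U (i + 1) = n + 3 + 2 * i" by simp
      have "trip n (?U (i + 1)) (?U i) (Lx n (i + 1)) True" unfolding e by (rule t)
      then show "\<exists>s. trip n (?U (i + 1)) (?U i) (Lx n (i + 1)) s" by (rule exI)
    qed
    show "\<And>i. ?p \<le> i \<Longrightarrow> Lx n i = ?U ?q" by (simp add: Lx_def)
    show "?q \<le> ?p" "?p \<le> ?q + 1" by presburger+
  qed
  from heads_cover[OF h] show ?thesis
  proof
    assume "\<exists>i < ?p. h = Lx n i"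
    then obtain i where i: "i < ?p" "h = Lx n i" by blast
    show ?thesis
    proof (cases "i \<le> ?q")
      case True
      have c: "E (?U (?q - (?q - i))) (?U ?q) \<and> E (Lx n (?q - (?q - i))) (?U ?q)"
        by (rule C) simp
      have e: "?q - (?q - i) = i" using True by simp
      have "E (Lx n i) (?U ?q)" using c unfolding e by blast
      then show ?thesis using i(2) by simp
    next
      case False
      then have "Lx n i = ?U ?q" using i by (simp add: Lx_def)
      then show ?thesis using i rf by simp
    qed
  next
    assume "\<exists>i \<le> ?q. h = ?U i"
    then obtain i where i: "i \<le> ?q" "h = ?U i" by blast
    have c: "E (?U (?q - (?q - i))) (?U ?q) \<and> E (Lx n (?q - (?q - i))) (?U ?q)"
      by (rule C) simp
    have e: "?q - (?q - i) = i" using i by simp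
    have "E (?U i) (?U ?q)" using c unfolding e by blast
    then show ?thesis using i(2) by simp
  qed
qed

declare qeq.qtrans[trans]

lemma qop_clos:
  assumes r: "qeq R U ((if s then QRt else QLt) V W)"
  shows "qeq R U W \<longleftrightarrow> qeq R V W"
proof (cases s)
  case True
  then have r: "qeq R U (QRt V W)" using r by simp
  show ?thesis
  proof
    assume uw: "qeq R U W"
    have "qeq R V (QLt (QRt V W) W)" by (rule qeq.qsym, rule qeq.qcancel2)
    also have "qeq R (QLt (QRt V W) W) (QLt U W)"
      by (rule qeq.qcongLt, rule qeq.qsym, rule r, rule qeq.qrefl)
    also have "qeq R (QLt U W) (QLt W W)" by (rule qeq.qcongLt, rule uw, rule qeq.qrefl)
    also have "qeq R (QLt W W) W" by (rule qeq.qidemLt)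
    finally show "qeq R V W" .
  next
    assume vw: "qeq R V W"
    have "qeq R U (QRt V W)" by (rule r)
    also have "qeq R (QRt V W) (QRt W W)" by (rule qeq.qcongRt, rule vw, rule qeq.qrefl)
    also have "qeq R (QRt W W) W" by (rule qeq.qidemRt)
    finally show "qeq R U W" .
  qed
next
  case False
  then have r: "qeq R U (QLt V W)" using r by simp
  show ?thesis
  proof
    assume uw: "qeq R U W"
    have "qeq R V (QRt (QLt V W) W)" by (rule qeq.qsym, rule qeq.qcancel1)
    also have "qeq R (QRt (QLt V W) W) (QRt U W)"
      by (rule qeq.qcongRt, rule qeq.qsym, rule r, rule qeq.qrefl)
    also have "qeq R (QRt U W) (QRt W W)" by (rule qeq.qcongRt, rule uw, rule qeq.qrefl)
    also have "qeq R (QRt W W) W" by (rule qeq.qidemRt)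
    finally show "qeq R V W" .
  next
    assume vw: "qeq R V W"
    have "qeq R U (QLt V W)" by (rule r)
    also have "qeq R (QLt V W) (QLt W W)" by (rule qeq.qcongLt, rule vw, rule qeq.qrefl)
    also have "qeq R (QLt W W) W" by (rule qeq.qidemLt)
    finally show "qeq R U W" .
  qed
qed

lemma (in group) conj_fix1:
  "W \<in> carrier G \<Longrightarrow> V \<in> carrier G \<Longrightarrow> (W \<otimes> V \<otimes> inv W = W) \<longleftrightarrow> V = W"
proof -
  assume a: "W \<in> carrier G" "V \<in> carrier G"
  have "(W \<otimes> V \<otimes> inv W = W) \<longleftrightarrow> W \<otimes> V = W \<otimes> W"
    using a by (intro inv_solve_right') auto
  also have "\<dots> \<longleftrightarrow> V = W" using a by (intro Units_l_cancel) (auto simp: Units_eq)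
  finally show ?thesis .
qed

lemma (in group) conj_fix2:
  "W \<in> carrier G \<Longrightarrow> V \<in> carrier G \<Longrightarrow> (inv W \<otimes> V \<otimes> W = W) \<longleftrightarrow> V = W"
  by (simp add: inv_solve_left' m_closed)

lemma quandle_part:
  assumes "i \<in> heads (A_arrows n)" "j \<in> heads (A_arrows n)"
  shows "qeq (quandle_rels (A_N n) (A_arrows n)) (QGen i) (QGen j)"
proof -
  let ?R = "quandle_rels (A_N n) (A_arrows n)"
  let ?E = "\<lambda>a b. qeq ?R (QGen a) (QGen b)"
  have clos: "?E u w \<longleftrightarrow> ?E v w" if t: "trip n u v w s" for u v w s
  proof -
    obtain tt where tt: "(tt, u, s) \<in> set (A_arrows n)" "v = arc_before (A_N n) (A_arrows n) u"
      "w = arc_before (A_N n) (A_arrows n) tt" using t unfolding trip_def by blast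
    have "(QGen u, (if s then QRt else QLt) (QGen v) (QGen w)) \<in> ?R"
      unfolding quandle_rels_def using tt by (force intro: image_eqI[of _ _ "(tt, u, s)"])
    then show ?thesis by (intro qop_clos qeq.qrel)
  qed
  have ae: "?E h (n + 1 + 2 * (n div 2))" if "h \<in> heads (A_arrows n)" for h
    by (rule all_heads[where E="?E", OF qeq.qrefl qeq.qsym qeq.qtrans clos that])
  show ?thesis using ae[OF assms(1)] ae[OF assms(2)] by (blast intro: qeq.qsym qeq.qtrans)
qed

lemma group_part: "fund_group (A_N n) (A_arrows n) \<cong> integer_group"
proof -
  let ?R = "group_rels (A_N n) (A_arrows n)"
  let ?G = "pres_group UNIV ?R"
  interpret G: group ?G by (rule group_pres)
  let ?E = "\<lambda>a b. cls ?R (GGen a) = cls ?R (GGen b)"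
  have cc: "cls ?R x \<in> carrier ?G" for x by (rule cls_in_carrier) simp
  have clos: "?E u w \<longleftrightarrow> ?E v w" if t: "trip n u v w s" for u v w s
  proof -
    obtain tt where tt: "(tt, u, s) \<in> set (A_arrows n)" "v = arc_before (A_N n) (A_arrows n) u"
      "w = arc_before (A_N n) (A_arrows n) tt" using t unfolding trip_def by blast
    have "(GGen u, if s then GMul (GMul (GGen w) (GGen v)) (GInv (GGen w))
                   else GMul (GMul (GInv (GGen w)) (GGen v)) (GGen w)) \<in> ?R"
      unfolding group_rels_def using tt by (force simp: Let_def intro: image_eqI[of _ _ "(tt, u, s)"])
    then have rel: "cls ?R (GGen u) = cls ?R (if s then GMul (GMul (GGen w) (GGen v)) (GInv (GGen w))
                   else GMul (GMul (GInv (GGen w)) (GGen v)) (GGen w))"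
      by (simp add: cls_eq_iff geq.grel)
    show ?thesis
    proof (cases s)
      case True
      then have "cls ?R (GGen u) = cls ?R (GGen w) \<otimes>\<^bsub>?G\<^esub> cls ?R (GGen v) \<otimes>\<^bsub>?G\<^esub> inv\<^bsub>?G\<^esub> cls ?R (GGen w)"
        using rel by (simp add: mult_pres inv_pres)
      then show ?thesis using G.conj_fix1[OF cc cc] by simp
    next
      case False
      then have "cls ?R (GGen u) = inv\<^bsub>?G\<^esub> cls ?R (GGen w) \<otimes>\<^bsub>?G\<^esub> cls ?R (GGen v) \<otimes>\<^bsub>?G\<^esub> cls ?R (GGen w)"
        using rel by (simp add: mult_pres inv_pres)
      then show ?thesis using G.conj_fix2[OF cc cc] by simp
    qed
  qed
  let ?top = "n + 1 + 2 * (n div 2)"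
  have ae: "?E h ?top" if "h \<in> heads (A_arrows n)" for h
    by (rule all_heads[where E="?E", OF refl sym trans clos that])
  have rels: "\<And>a b. (a, b) \<in> ?R \<Longrightarrow> gexp a = gexp b"
    unfolding group_rels_def by (auto simp: Let_def)
  show ?thesis
    unfolding fund_group_def by (rule pres_iso_Z[OF rels top_head ae])
qed

theorem theorem10:
  fixes n :: nat
  shows "(\<forall>i\<in>heads (A_arrows n). \<forall>j\<in>heads (A_arrows n).
            qeq (quandle_rels (A_N n) (A_arrows n)) (QGen i) (QGen j))
         \<and> fund_group (A_N n) (A_arrows n) \<cong> integer_group"
  using quandle_part group_part by blast

end
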